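(* Let $n\geqslant 3$, let $\lambda\in\mathcal{D}_n$ have length $\ell\geqslant 3$, set $r=2\lfloor(\ell+1)/2\rfloor$ and $\lambda_j=0$ for $j>\ell$. Then $$\sum_{j=1}^{r-1}(-1)^{j-1}\,\partial_{\Box}\bigl(\widetilde{P}_{\lambda_j,\lambda_r}(X)\bigr)\cdot\partial_{\Box}\bigl(\widetilde{P}_{\lambda\smallsetminus\{\lambda_j,\lambda_r\}}(X)\bigr)=0$$ in $A[X]$, where $A=\mathbb{Z}[\tfrac12]$.
   Context: $X=(x_1,\ldots,x_n)$. $\mathcal{D}_n$ is the set of strict partitions with all parts $\leqslant n$. $\widetilde{P}$-polynomials: $\widetilde{P}_0(X)=1$, $\widetilde{P}_i(X)=e_i(X)/2$ for $i>0$ ($e_i$ elementary symmetric); for $i\geqslant j\geqslant 0$, $\widetilde{P}_{i,j}(X)=\widetilde{P}_i\widetilde{P}_j+2\sum_{k=1}^{j-1}(-1)^k\widetilde{P}_{i+k}\widetilde{P}_{j-k}+(-1)^j\widetilde{P}_{i+j}$ (so $\widetilde P_{i,0}=\widetilde P_i$); for a partition $\mu$ of length $m$, $\widetilde{P}_\mu(X)=\mathrm{Pfaffian}[\widetilde{P}_{\mu_i,\mu_j}(X)]_{1\leqslant i<j\leqslant 2\lfloor(m+1)/2\rfloor}$. For strict partitions, $\lambda\smallsetminus\mu$ is the partition whose parts are the parts of $\lambda$ that are not parts of $\mu$. The operator $\partial_\Box$ on $A[X]$ is $\partial_\Box(f)=(f-s_\Box f)/(x_1+x_2)$, where $s_\Box$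 sends $(x_1,x_2)\mapsto(-x_2,-x_1)$ and fixes $x_3,\ldots,x_n$. (For nonzero $\mu\in\mathcal{D}_{n-1}$, $\partial_\Box(\widetilde P_\mu(X))$ equals the type $D$ Schubert polynomial $\mathfrak{D}'_\mu(X)=\mathfrak{D}_{w_\mu s_\Box}(X)$ representing a Schubert class on $SO_{2n}/B$.) *)

theory Defs
  imports Complex_Main "HOL-Combinatorics.Permutations"
begin

text \<open>Points of affine n-space over the rationals: x :: nat => rat, coordinates x 1, ..., x n.
 A polynomial in A[X], A = Z[1/2] (a subring of Q), is represented by its polynomial function on Q^n.\<close>

definition esym :: "nat \<Rightarrow> nat \<Rightarrow> (nat \<Rightarrow> rat) \<Rightarrow> rat" where
  "esym n i x = (\<Sum>S\<in>{S. S \<subseteq> {1..n} \<and> card S = i}. \<Prod>k\<in>S. x k)"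

definition Pt1 :: "nat \<Rightarrow> nat \<Rightarrow> (nat \<Rightarrow> rat) \<Rightarrow> rat" where
  "Pt1 n i x = (if i = 0 then 1 else esym n i x / 2)"

text \<open>Ptilde_{i,j} (used for i >= j >= 0).\<close>
definition Pt2 :: "nat \<Rightarrow> nat \<Rightarrow> nat \<Rightarrow> (nat \<Rightarrow> rat) \<Rightarrow> rat" where
  "Pt2 n i j x = Pt1 n i x * Pt1 n j x
     + 2 * (\<Sum>k\<in>{1..<j}. (-1)^k * Pt1 n (i+k) x * Pt1 n (j-k) x)
     + (-1)^j * Pt1 n (i+j) x"

definition skew :: "(nat \<Rightarrow> nat \<Rightarrow> rat) \<Rightarrow> nat \<Rightarrow> nat \<Rightarrow> rat" where
  "skew a i j = (if i < j then a i j else if j < i then - a j i else 0)"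

definition pfaffian :: "nat \<Rightarrow> (nat \<Rightarrow> nat \<Rightarrow> rat) \<Rightarrow> rat" where
  "pfaffian k a = (\<Sum>\<sigma>\<in>{\<sigma>. \<sigma> permutes {0..<2*k}}.
       of_int (sign \<sigma>) * (\<Prod>i<k. skew a (\<sigma> (2*i)) (\<sigma> (2*i+1))))
     / (2^k * fact k)"

text \<open>The j-th part (1-indexed) of a partition given as a list, padded with zeros.\<close>
definition part :: "nat list \<Rightarrow> nat \<Rightarrow> nat" where
  "part mu j = (if 1 \<le> j \<and> j \<le> length mu then mu ! (j - 1) else 0)"

text \<open>Ptilde_mu for a partition mu (decreasing list) of length m:
 Pfaffian of [Ptilde_{mu_i,mu_j}], 1 <= i < j <= 2 floor((m+1)/2).\<close>
definition PtP :: "nat \<Rightarrow> nat list \<Rightarrow> (nat \<Rightarrow> rat) \<Rightarrow> rat" where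
  "PtP n mu x = pfaffian ((length mu + 1) div 2)
      (\<lambda>i j. Pt2 n (part mu (i+1)) (part mu (j+1)) x)"

text \<open>Strict partitions with all parts <= n (D_n), as strictly decreasing lists of positive parts.\<close>
definition strict_partition_le :: "nat \<Rightarrow> nat list \<Rightarrow> bool" where
  "strict_partition_le n lam \<longleftrightarrow> sorted_wrt (>) lam \<and> (\<forall>p\<in>set lam. 1 \<le> p \<and> p \<le> n)"

definition remove_parts :: "nat list \<Rightarrow> nat set \<Rightarrow> nat list" where
  "remove_parts lam S = filter (\<lambda>p. p \<notin> S) lam"

definition sbox :: "(nat \<Rightarrow> rat) \<Rightarrow> nat \<Rightarrow> rat" where
  "sbox x = x(1 := - x 2, 2 := - x 1)"

definition dbox :: "((nat \<Rightarrow> rat) \<Rightarrow> rat) \<Rightarrow> (nat \<Rightarrow> rat) \<Rightarrow> rat" where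
  "dbox f x = (f x - f (sbox x)) / (x 1 + x 2)"

end

theory Submission
  imports Defs
begin


lemma odd_neq_even1 [simp]: "2*i \<noteq> Suc (2*(j::nat))" by presburger
lemma odd_neq_even2 [simp]: "Suc (2*(j::nat)) \<noteq> 2*i" by presburger

definition pt :: "(nat \<Rightarrow> nat \<Rightarrow> rat) \<Rightarrow> nat \<Rightarrow> (nat \<Rightarrow> nat) \<Rightarrow> rat" where
  "pt a k \<sigma> = of_int (sign \<sigma>) * (\<Prod>i<k. skew a (\<sigma> (2*i)) (\<sigma> (2*i+1)))"

lemma pf_alt: "pfaffian k a = (\<Sum>\<sigma>\<in>{\<sigma>. \<sigma> permutes {0..<2*k}}. pt a k \<sigma>) / (2^k * fact k)"
  unfolding pfaffian_def pt_def by simp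

lemma perm_lt: "\<sigma> permutes {0..<N} \<Longrightarrow> x < N \<Longrightarrow> \<sigma> x < (N::nat)"
  using permutes_in_image[of \<sigma> "{0..<N}" x] by auto

lemma pf_cong:
  assumes "\<And>u v. u < v \<Longrightarrow> v < 2*k \<Longrightarrow> a u v = b u v"
  shows "pfaffian k a = pfaffian k b"
proof -
  have sk: "skew a u v = skew b u v" if "u < 2*k" "v < 2*k" for u v
    using assms that by (auto simp: skew_def)
  have "pt a k \<sigma> = pt b k \<sigma>" if "\<sigma> permutes {0..<2*k}" for \<sigma>
    unfolding pt_def
  proof (intro arg_cong2[where f="(*)"] refl prod.cong)
    fix i assume "i \<in> {..<k}"
    then have "2*i < 2*k" "2*i+1 < 2*k" by auto
    then show "skew a (\<sigma> (2 * i)) (\<sigma> (2 * i + 1)) = skew b (\<sigma> (2 * i)) (\<sigma> (2 * i + 1))"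
      using perm_lt[OF that, of "2*i"] perm_lt[OF that, of "2*i+1"] sk by blast
  qed
  then show ?thesis unfolding pf_alt by simp
qed

lemma perm_set_reindex:
  assumes "t permutes {0..<N}" "t \<circ> t = id"
  shows "(\<Sum>\<sigma>\<in>{\<sigma>. \<sigma> permutes {0..<N}}. g (\<sigma> \<circ> t)) = (\<Sum>\<sigma>\<in>{\<sigma>. \<sigma> permutes {0..<N}}. (g \<sigma> :: rat))"
  apply (rule sum.reindex_bij_witness[where i="\<lambda>\<sigma>. \<sigma> \<circ> t" and j="\<lambda>\<sigma>. \<sigma> \<circ> t"])
  using assms by (auto simp: comp_assoc intro: permutes_compose)

lemma sign_comp_swap:
  assumes "\<sigma> permutes {0..<(N::nat)}" "a \<noteq> b"
  shows "sign (\<sigma> \<circ> transpose a b) = - sign \<sigma>"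
proof -
  have "permutation \<sigma>" by (rule permutes_imp_permutation[OF _ assms(1)]) simp
  then have "sign (\<sigma> \<circ> transpose a b) = sign \<sigma> * sign (transpose a b)"
    by (rule sign_compose[OF _ permutation_swap_id])
  then show ?thesis using assms(2) by (simp add: sign_swap_id)
qed

lemma flip_inv:
  assumes "\<sigma> permutes {0..<2*K}" "l < K"
  shows "pt a K (\<sigma> \<circ> transpose (2*l) (2*l+1)) = pt a K \<sigma>"
proof -
  let ?t = "transpose (2*l) (2*l+1)"
  let ?g = "\<lambda>\<sigma> i. skew a (\<sigma> (2*i)) (\<sigma> (2*i+1))"
  have fin: "finite {..<K}" by simp
  have lin: "l \<in> {..<K}" using assms by simp
  have p1: "(\<Prod>i<K. ?g (\<sigma> \<circ> ?t) i) = ?g (\<sigma> \<circ> ?t) l * (\<Prod>i\<in>{..<K}-{l}. ?g (\<sigma> \<circ> ?t) i)"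
    using prod.remove[OF fin lin] by blast
  have p2: "(\<Prod>i<K. ?g \<sigma> i) = ?g \<sigma> l * (\<Prod>i\<in>{..<K}-{l}. ?g \<sigma> i)"
    using prod.remove[OF fin lin] by blast
  have p3: "(\<Prod>i\<in>{..<K}-{l}. ?g (\<sigma> \<circ> ?t) i) = (\<Prod>i\<in>{..<K}-{l}. ?g \<sigma> i)"
    by (rule prod.cong) (auto simp: transpose_def)
  have p4: "?g (\<sigma> \<circ> ?t) l = - ?g \<sigma> l"
    by (auto simp: transpose_def skew_def)
  have s: "sign (\<sigma> \<circ> ?t) = - sign \<sigma>" using sign_comp_swap[OF assms(1)] by simp
  show ?thesis unfolding pt_def p1 p2 p3 p4 s by simp
qed

lemma block_inv:
  assumes "\<sigma> permutes {0..<2*K}" "l < K" "i < K" "i \<noteq> l"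
  shows "pt a K (\<sigma> \<circ> (transpose (2*i) (2*l) \<circ> transpose (2*i+1) (2*l+1))) = pt a K \<sigma>"
proof -
  let ?t = "transpose (2*i) (2*l) \<circ> transpose (2*i+1) (2*l+1)"
  let ?g = "\<lambda>\<sigma> i. skew a (\<sigma> (2*i)) (\<sigma> (2*i+1))"
  have r: "(\<Prod>j<K. ?g (\<sigma> \<circ> ?t) j) = (\<Prod>j<K. ?g (\<sigma> \<circ> ?t) (transpose i l j))"
    apply (rule prod.reindex_bij_witness[where i="transpose i l" and j="transpose i l"])
    using assms by (auto simp: transpose_def)
  have r2: "(\<Prod>j<K. ?g (\<sigma> \<circ> ?t) (transpose i l j)) = (\<Prod>j<K. ?g \<sigma> j)"
    by (rule prod.cong) (auto simp: transpose_def)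
  have pa: "permutation \<sigma>" by (rule permutes_imp_permutation[OF _ assms(1)]) simp
  have s: "sign (\<sigma> \<circ> ?t) = sign \<sigma>"
    using assms by (simp add: sign_compose permutation_swap_id sign_swap_id permutation_compose pa)
  show ?thesis unfolding pt_def r r2 s by simp
qed

definition WW :: "(nat \<Rightarrow> rat) \<Rightarrow> (nat \<Rightarrow> rat) \<Rightarrow> nat \<Rightarrow> nat \<Rightarrow> rat" where
  "WW \<alpha> \<beta> u v = \<alpha> u * \<beta> v - \<alpha> v * \<beta> u"

definition TB :: "(nat \<Rightarrow> nat \<Rightarrow> rat) \<Rightarrow> (nat \<Rightarrow> rat) \<Rightarrow> (nat \<Rightarrow> rat) \<Rightarrow> nat \<Rightarrow> nat set \<Rightarrow> (nat \<Rightarrow> nat) \<Rightarrow> rat" where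
  "TB X \<alpha> \<beta> k B \<sigma> = of_int (sign \<sigma>) * ((\<Prod>i\<in>B. WW \<alpha> \<beta> (\<sigma> (2*i)) (\<sigma> (2*i+1)))
      * (\<Prod>i\<in>{..<k}-B. skew X (\<sigma> (2*i)) (\<sigma> (2*i+1))))"

lemma TB_zero:
  assumes B: "B \<subseteq> {..<k}" "i1 \<in> B" "i2 \<in> B" "i1 \<noteq> i2"
  shows "(\<Sum>\<sigma>\<in>{\<sigma>. \<sigma> permutes {0..<2*k}}. TB X \<alpha> \<beta> k B \<sigma>) = 0"
proof -
  let ?P = "{\<sigma>. \<sigma> permutes {0..<2*k}}"
  let ?f = "TB X \<alpha> \<beta> k B"
  define t1 where "t1 = transpose (2*i1+1) (2*i2)"
  define t2 where "t2 = transpose (2*i1+1) (2*i2+1)"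
  have i12: "i1 < k" "i2 < k" using B by auto
  have t1p: "t1 permutes {0..<2*k}" unfolding t1_def using i12 by (intro permutes_swap_id) auto
  have t2p: "t2 permutes {0..<2*k}" unfolding t2_def using i12 by (intro permutes_swap_id) auto
  have t1i: "t1 \<circ> t1 = id" unfolding t1_def by (rule transpose_comp_involutory)
  have t2i: "t2 \<circ> t2 = id" unfolding t2_def by (rule transpose_comp_involutory)
  have key: "?f \<sigma> + ?f (\<sigma> \<circ> t1) + ?f (\<sigma> \<circ> t2) = 0" if sp: "\<sigma> \<in> ?P" for \<sigma>
  proof -
    have sp': "\<sigma> permutes {0..<2*k}" using sp by simp
    have s1: "sign (\<sigma> \<circ> t1) = - sign \<sigma>" unfolding t1_def by (rule sign_comp_swap[OF sp']) simp
    have s2: "sign (\<sigma> \<circ> t2) = - sign \<sigma>" unfolding t2_def by (rule sign_comp_swap[OF sp']) (use B in simp)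
    let ?W = "WW \<alpha> \<beta>"
    define B' where "B' = B - {i1} - {i2}"
    have finB: "finite B" by (rule finite_subset[OF B(1)]) simp
    have split: "(\<Prod>i\<in>B. g i) = g i1 * (g i2 * (\<Prod>i\<in>B'. g i))" for g :: "nat \<Rightarrow> rat"
    proof -
      have "(\<Prod>i\<in>B. g i) = g i1 * (\<Prod>i\<in>B-{i1}. g i)" using prod.remove[OF finB B(2)] by blast
      moreover have "(\<Prod>i\<in>B-{i1}. g i) = g i2 * (\<Prod>i\<in>B-{i1}-{i2}. g i)"
        using prod.remove[of "B-{i1}" i2 g] finB B by auto
      ultimately show ?thesis unfolding B'_def by simp
    qed
    have rB1: "(\<Prod>i\<in>B'. ?W ((\<sigma> \<circ> t1) (2*i)) ((\<sigma> \<circ> t1) (2*i+1))) = (\<Prod>i\<in>B'. ?W (\<sigma> (2*i)) (\<sigma> (2*i+1)))"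
      by (rule prod.cong) (auto simp: B'_def t1_def transpose_def)
    have rB2: "(\<Prod>i\<in>B'. ?W ((\<sigma> \<circ> t2) (2*i)) ((\<sigma> \<circ> t2) (2*i+1))) = (\<Prod>i\<in>B'. ?W (\<sigma> (2*i)) (\<sigma> (2*i+1)))"
      by (rule prod.cong) (auto simp: B'_def t2_def transpose_def)
    have rR1: "(\<Prod>i\<in>{..<k}-B. skew X ((\<sigma> \<circ> t1) (2*i)) ((\<sigma> \<circ> t1) (2*i+1))) = (\<Prod>i\<in>{..<k}-B. skew X (\<sigma> (2*i)) (\<sigma> (2*i+1)))"
      by (rule prod.cong) (use B in \<open>auto simp: t1_def transpose_def\<close>)
    have rR2: "(\<Prod>i\<in>{..<k}-B. skew X ((\<sigma> \<circ> t2) (2*i)) ((\<sigma> \<circ> t2) (2*i+1))) = (\<Prod>i\<in>{..<k}-B. skew X (\<sigma> (2*i)) (\<sigma> (2*i+1)))"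
      by (rule prod.cong) (use B in \<open>auto simp: t2_def transpose_def\<close>)
    have v1: "(\<sigma> \<circ> t1) (2*i1) = \<sigma> (2*i1)" "(\<sigma> \<circ> t1) (2*i1+1) = \<sigma> (2*i2)"
       "(\<sigma> \<circ> t1) (2*i2) = \<sigma> (2*i1+1)" "(\<sigma> \<circ> t1) (2*i2+1) = \<sigma> (2*i2+1)"
      using B by (auto simp: t1_def transpose_def)
    have v2: "(\<sigma> \<circ> t2) (2*i1) = \<sigma> (2*i1)" "(\<sigma> \<circ> t2) (2*i1+1) = \<sigma> (2*i2+1)"
       "(\<sigma> \<circ> t2) (2*i2) = \<sigma> (2*i2)" "(\<sigma> \<circ> t2) (2*i2+1) = \<sigma> (2*i1+1)"
      using B by (auto simp: t2_def transpose_def)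
    define a where "a = \<sigma> (2*i1)"
    define b where "b = \<sigma> (2*i1+1)"
    define c where "c = \<sigma> (2*i2)"
    define d where "d = \<sigma> (2*i2+1)"
    define R where "R = (\<Prod>i\<in>B'. ?W (\<sigma> (2*i)) (\<sigma> (2*i+1))) * (\<Prod>i\<in>{..<k}-B. skew X (\<sigma> (2*i)) (\<sigma> (2*i+1)))"
    have e0: "?f \<sigma> = of_int (sign \<sigma>) * (?W a b * ?W c d) * R"
      unfolding TB_def split[of "\<lambda>i. ?W (\<sigma> (2*i)) (\<sigma> (2*i+1))"] R_def a_def b_def c_def d_def by simp
    have e1: "?f (\<sigma> \<circ> t1) = - of_int (sign \<sigma>) * (?W a c * ?W b d) * R"
      unfolding TB_def split[of "\<lambda>i. ?W ((\<sigma> \<circ> t1) (2*i)) ((\<sigma> \<circ> t1) (2*i+1))"] rB1 rR1 s1 v1 R_def a_def b_def c_def d_def by simp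
    have e2: "?f (\<sigma> \<circ> t2) = - of_int (sign \<sigma>) * (?W a d * ?W c b) * R"
      unfolding TB_def split[of "\<lambda>i. ?W ((\<sigma> \<circ> t2) (2*i)) ((\<sigma> \<circ> t2) (2*i+1))"] rB2 rR2 s2 v2 R_def a_def b_def c_def d_def by simp
    have z: "?W a b * ?W c d - ?W a c * ?W b d - ?W a d * ?W c b = 0"
      unfolding WW_def by (simp add: algebra_simps)
    have "?f \<sigma> + ?f (\<sigma> \<circ> t1) + ?f (\<sigma> \<circ> t2) = of_int (sign \<sigma>) * R * (?W a b * ?W c d - ?W a c * ?W b d - ?W a d * ?W c b)"
      unfolding e0 e1 e2 by (simp add: algebra_simps)
    then show ?thesis unfolding z by simp
  qed
  have "3 * (\<Sum>\<sigma>\<in>?P. ?f \<sigma>) = (\<Sum>\<sigma>\<in>?P. ?f \<sigma>) + (\<Sum>\<sigma>\<in>?P. ?f (\<sigma> \<circ> t1)) + (\<Sum>\<sigma>\<in>?P. ?f (\<sigma> \<circ> t2))"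
    using perm_set_reindex[OF t1p t1i, of ?f] perm_set_reindex[OF t2p t2i, of ?f] by simp
  also have "\<dots> = (\<Sum>\<sigma>\<in>?P. ?f \<sigma> + ?f (\<sigma> \<circ> t1) + ?f (\<sigma> \<circ> t2))"
    by (simp add: sum.distrib)
  also have "\<dots> = 0" using key by simp
  finally show ?thesis by simp
qed



lemma skew_lin: "skew (\<lambda>u v. X u v + \<tau> * WW \<alpha> \<beta> u v) u v = skew X u v + \<tau> * WW \<alpha> \<beta> u v"
  by (auto simp: skew_def WW_def algebra_simps)

lemma card_ge2_obtain:
  assumes "2 \<le> card (B::nat set)"
  obtains i1 i2 where "i1 \<in> B" "i2 \<in> B" "i1 \<noteq> i2"
proof -
  have "B \<noteq> {}" using assms by auto
  then obtain i1 where i1: "i1 \<in> B" by blast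
  have fin: "finite B" using assms card.infinite by fastforce
  have "card (B - {i1}) \<ge> 1" using assms i1 fin by (simp add: card_Diff_singleton)
  then have "B - {i1} \<noteq> {}" by (metis card.empty not_one_le_zero)
  then obtain i2 where "i2 \<in> B - {i1}" by blast
  then show ?thesis using that i1 by blast
qed

lemma pf_affine_ex: "\<exists>A C. \<forall>\<tau>. pfaffian k (\<lambda>u v. X u v + \<tau> * WW \<alpha> \<beta> u v) = A + \<tau> * C"
proof -
  let ?P = "{\<sigma>. \<sigma> permutes {0..<2*k}}"
  define T where "T B = (\<Sum>\<sigma>\<in>?P. TB X \<alpha> \<beta> k B \<sigma>)" for B
  define A0 where "A0 = (\<Sum>B\<in>Pow {..<k}. if card B = 0 then T B else 0)"
  define C0 where "C0 = (\<Sum>B\<in>Pow {..<k}. if card B = 1 then T B else 0)"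
  have main: "(\<Sum>\<sigma>\<in>?P. pt (\<lambda>u v. X u v + \<tau> * WW \<alpha> \<beta> u v) k \<sigma>) = A0 + \<tau> * C0" for \<tau>
  proof -
    have ptx: "pt (\<lambda>u v. X u v + \<tau> * WW \<alpha> \<beta> u v) k \<sigma> = (\<Sum>B\<in>Pow {..<k}. \<tau> ^ card B * TB X \<alpha> \<beta> k B \<sigma>)" for \<sigma>
    proof -
      have "(\<Prod>i<k. skew (\<lambda>u v. X u v + \<tau> * WW \<alpha> \<beta> u v) (\<sigma> (2*i)) (\<sigma> (2*i+1)))
          = (\<Prod>i<k. \<tau> * WW \<alpha> \<beta> (\<sigma> (2*i)) (\<sigma> (2*i+1)) + skew X (\<sigma> (2*i)) (\<sigma> (2*i+1)))"
        by (simp add: skew_lin add.commute)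
      also have "\<dots> = (\<Sum>B\<in>Pow {..<k}. (\<Prod>i\<in>B. \<tau> * WW \<alpha> \<beta> (\<sigma> (2*i)) (\<sigma> (2*i+1))) * (\<Prod>i\<in>{..<k}-B. skew X (\<sigma> (2*i)) (\<sigma> (2*i+1))))"
        by (rule prod_add) simp
      also have "\<dots> = (\<Sum>B\<in>Pow {..<k}. \<tau> ^ card B * ((\<Prod>i\<in>B. WW \<alpha> \<beta> (\<sigma> (2*i)) (\<sigma> (2*i+1))) * (\<Prod>i\<in>{..<k}-B. skew X (\<sigma> (2*i)) (\<sigma> (2*i+1)))))"
        by (simp add: prod.distrib mult.assoc)
      finally show ?thesis unfolding pt_def TB_def by (simp add: sum_distrib_left algebra_simps)
    qed
    have "(\<Sum>\<sigma>\<in>?P. pt (\<lambda>u v. X u v + \<tau> * WW \<alpha> \<beta> u v) k \<sigma>) = (\<Sum>B\<in>Pow {..<k}. \<tau> ^ card B * T B)"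
      unfolding ptx T_def by (simp add: sum_distrib_left sum.swap[of _ ?P])
    also have "\<dots> = (\<Sum>B\<in>Pow {..<k}. (if card B = 0 then T B else 0) + \<tau> * (if card B = 1 then T B else 0))"
    proof (rule sum.cong[OF refl])
      fix B assume B: "B \<in> Pow {..<k}"
      show "\<tau> ^ card B * T B = (if card B = 0 then T B else 0) + \<tau> * (if card B = 1 then T B else 0)"
      proof (cases "card B \<ge> 2")
        case True
        then obtain i1 i2 where "i1 \<in> B" "i2 \<in> B" "i1 \<noteq> i2" by (rule card_ge2_obtain)
        then have "T B = 0" unfolding T_def using B by (intro TB_zero) auto
        then show ?thesis by simp
      next
        case False
        then have "card B = 0 \<or> card B = 1" by linarith
        then show ?thesis by auto
      qed
    qed
    also have "\<dots> = A0 + \<tau> * C0" unfolding A0_def C0_def by (simp add: sum.distrib sum_distrib_left)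
    finally show ?thesis .
  qed
  show ?thesis
    apply (rule exI[of _ "A0 / (2^k * fact k)"], rule exI[of _ "C0 / (2^k * fact k)"])
    unfolding pf_alt main by (simp add: add_divide_distrib)
qed

lemma pf_affine:
  "pfaffian k (\<lambda>u v. X u v + \<tau> * WW \<alpha> \<beta> u v) =
   pfaffian k (\<lambda>u v. X u v + 0 * WW \<alpha> \<beta> u v) + \<tau> * (pfaffian k (\<lambda>u v. X u v + 1 * WW \<alpha> \<beta> u v) - pfaffian k (\<lambda>u v. X u v + 0 * WW \<alpha> \<beta> u v))"
proof -
  obtain A C where "\<forall>\<tau>. pfaffian k (\<lambda>u v. X u v + \<tau> * WW \<alpha> \<beta> u v) = A + \<tau> * C"
    using pf_affine_ex by blast
  then have e: "\<And>\<tau>. pfaffian k (\<lambda>u v. X u v + \<tau> * WW \<alpha> \<beta> u v) = A + \<tau> * C" by blast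
  show ?thesis unfolding e by simp
qed



definition sk :: "nat \<Rightarrow> nat \<Rightarrow> nat" where "sk j u = (if u < j then u else Suc u)"
definition pj :: "nat \<Rightarrow> nat \<Rightarrow> nat \<Rightarrow> nat" where
  "pj M j u = (if u < j then u else if u < M then Suc u else if u = M then j else u)"

lemma pj_id: "pj M M = id"
  by (rule ext) (simp add: pj_def)

lemma pj_rec: "j < M \<Longrightarrow> pj M j = transpose j (Suc j) \<circ> pj M (Suc j)"
  by (rule ext) (auto simp: pj_def transpose_def)

lemma pj_props: "j \<le> M \<Longrightarrow> pj M j permutes {0..<Suc M} \<and> sign (pj M j) = (-1)^(M-j)"
proof (induction "M - j" arbitrary: j)
  case 0
  then have "j = M" by simp
  then show ?case using permutes_id[of "{0..<Suc M}"] by (simp add: pj_id id_def)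
next
  case (Suc d)
  then have jM: "j < M" by simp
  have IH: "pj M (Suc j) permutes {0..<Suc M} \<and> sign (pj M (Suc j)) = (-1)^(M - Suc j)"
    using Suc jM by (intro Suc.hyps(1)) auto
  have tp: "transpose j (Suc j) permutes {0..<Suc M}" using jM by (intro permutes_swap_id) auto
  have perm1: "permutation (pj M (Suc j))"
    by (rule permutes_imp_permutation[OF _ conjunct1[OF IH]]) simp
  have "sign (transpose j (Suc j) \<circ> pj M (Suc j)) = sign (transpose j (Suc j)) * sign (pj M (Suc j))"
    by (rule sign_compose[OF permutation_swap_id perm1])
  also have "\<dots> = - ((-1)^(M - Suc j))" using IH by (simp add: sign_swap_id)
  also have "\<dots> = (-1)^(M - j)" using jM
    by (metis Suc_diff_Suc mult_minus1 power_Suc)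
  finally show ?case unfolding pj_rec[OF jM] using permutes_compose[OF conjunct1[OF IH] tp] by simp
qed

lemma perm_pos_reindex:
  assumes rp: "\<rho> permutes {0..<N}" and rm: "\<rho> m = p"
    and inv: "\<And>\<sigma>. \<sigma> permutes {0..<N} \<Longrightarrow> G (\<sigma> \<circ> \<rho>) = G \<sigma>"
  shows "(\<Sum>\<sigma>\<in>{\<sigma>. \<sigma> permutes {0..<N} \<and> \<sigma> p = m}. G \<sigma>) = (\<Sum>\<sigma>\<in>{\<sigma>. \<sigma> permutes {0..<N} \<and> \<sigma> m = m}. (G \<sigma> :: rat))"
proof (rule sum.reindex_bij_witness[where j="\<lambda>\<tau>. \<tau> \<circ> \<rho>" and i="\<lambda>\<sigma>. \<sigma> \<circ> inv \<rho>"])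
  have io: "\<rho> \<circ> inv \<rho> = id" "inv \<rho> \<circ> \<rho> = id" using permutes_inv_o[OF rp] by auto
  have ip: "inv \<rho> p = m" using permutes_inv_eq[OF rp] rm by simp
  fix a assume a: "a \<in> {\<sigma>. \<sigma> permutes {0..<N} \<and> \<sigma> p = m}"
  show "a \<circ> \<rho> \<circ> inv \<rho> = a" by (simp add: comp_assoc io)
  show "a \<circ> \<rho> \<in> {\<sigma>. \<sigma> permutes {0..<N} \<and> \<sigma> m = m}" using a rm permutes_compose[OF rp] by auto
  show "G (a \<circ> \<rho>) = G a" using a inv by auto
next
  have io: "\<rho> \<circ> inv \<rho> = id" "inv \<rho> \<circ> \<rho> = id" using permutes_inv_o[OF rp] by auto
  have ip: "inv \<rho> p = m" using permutes_inv_eq[OF rp] rm by simp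
  fix b assume b: "b \<in> {\<sigma>. \<sigma> permutes {0..<N} \<and> \<sigma> m = m}"
  show "b \<circ> inv \<rho> \<circ> \<rho> = b" by (simp add: comp_assoc io)
  show "b \<circ> inv \<rho> \<in> {\<sigma>. \<sigma> permutes {0..<N} \<and> \<sigma> p = m}"
    using b ip permutes_compose[OF permutes_inv[OF rp]] by auto
qed

lemma rho_exists:
  assumes "p < 2 * Suc k"
  shows "\<exists>\<rho>. \<rho> permutes {0..<2 * Suc k} \<and> \<rho> (2*k+1) = p \<and>
     (\<forall>\<sigma>. \<sigma> permutes {0..<2 * Suc k} \<longrightarrow> pt a (Suc k) (\<sigma> \<circ> \<rho>) = pt a (Suc k) \<sigma>)"
proof -
  have "p = 2*k+1 \<or> p = 2*k \<or> p < 2*k" using assms by presburger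
  then consider "p = 2*k+1" | "p = 2*k" | "p < 2*k" by blast
  then show ?thesis
  proof cases
    case 1
    then show ?thesis by (intro exI[of _ id]) (simp add: permutes_id)
  next
    case 2
    let ?t = "transpose (2*k) (2*k+1)"
    have "?t permutes {0..<2 * Suc k}" by (intro permutes_swap_id) auto
    moreover have "?t (2*k+1) = p" using 2 by simp
    moreover have "pt a (Suc k) (\<sigma> \<circ> ?t) = pt a (Suc k) \<sigma>" if "\<sigma> permutes {0..<2 * Suc k}" for \<sigma>
      using flip_inv[OF that, of k] by simp
    ultimately show ?thesis by blast
  next
    case 3
    define i where "i = p div 2"
    have ik: "i < k" using 3 unfolding i_def by simp
    let ?b = "transpose (2*i) (2*k) \<circ> transpose (2*i+1) (2*k+1)"
    let ?t = "transpose (2*k) (2*k+1)"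
    have bp: "?b permutes {0..<2 * Suc k}"
      using ik by (intro permutes_compose permutes_swap_id) auto
    have tp: "?t permutes {0..<2 * Suc k}" by (intro permutes_swap_id) auto
    have binv: "pt a (Suc k) (\<sigma> \<circ> ?b) = pt a (Suc k) \<sigma>" if "\<sigma> permutes {0..<2 * Suc k}" for \<sigma>
      using block_inv[OF that, of k i] ik by simp
    show ?thesis
    proof (cases "even p")
      case True
      then have p: "p = 2*i" unfolding i_def by simp
      have "(?b \<circ> ?t) permutes {0..<2 * Suc k}" by (rule permutes_compose[OF tp bp])
      moreover have "(?b \<circ> ?t) (2*k+1) = p" using p ik by (simp add: transpose_def)
      moreover have "pt a (Suc k) (\<sigma> \<circ> (?b \<circ> ?t)) = pt a (Suc k) \<sigma>" if sp: "\<sigma> permutes {0..<2 * Suc k}" for \<sigma>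
      proof -
        have sb: "(\<sigma> \<circ> ?b) permutes {0..<2 * Suc k}" by (rule permutes_compose[OF bp sp])
        have "pt a (Suc k) (\<sigma> \<circ> (?b \<circ> ?t)) = pt a (Suc k) ((\<sigma> \<circ> ?b) \<circ> ?t)" by (simp add: comp_assoc)
        also have "\<dots> = pt a (Suc k) (\<sigma> \<circ> ?b)" using flip_inv[OF sb, of k] by simp
        also have "\<dots> = pt a (Suc k) \<sigma>" by (rule binv[OF sp])
        finally show ?thesis .
      qed
      ultimately show ?thesis by blast
    next
      case False
      then have p: "p = 2*i+1" unfolding i_def by presburger
      have "?b (2*k+1) = p" using p ik by (simp add: transpose_def)
      then show ?thesis using bp binv by blast
    qed
  qed
qed



lemma skew_sk: "skew a (sk j u) (sk j v) = skew (\<lambda>u v. a (sk j u) (sk j v)) u v"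
  by (auto simp: skew_def sk_def)

lemma neg1_pow_diff: "j \<le> 2*k \<Longrightarrow> ((-1::int)^(2*k-j)) = (-1)^j"
proof -
  assume "j \<le> 2*k"
  then have "2*k - j + j = 2*k" by simp
  then have "((-1::int)^(2*k-j)) * (-1)^j = 1" by (metis power_add power_mult neg_one_even_power even_mult_iff even_numeral)
  then show ?thesis by (metis mult.right_neutral mult_minus1_right power_minus1_odd neg_one_odd_power
       square_eq_1_iff mult_cancel_left1 left_minus_one_mult_self)
qed

lemma S4:
  assumes jl: "j < 2*k+1"
  shows "(\<Sum>\<sigma>\<in>{\<sigma>. (\<sigma> permutes {0..<2 * Suc k} \<and> \<sigma> (2*k+1) = 2*k+1) \<and> \<sigma> (2*k) = j}. pt a (Suc k) \<sigma>)
    = (-1)^j * a j (2*k+1) * (\<Sum>\<rho>\<in>{\<rho>. \<rho> permutes {0..<2*k}}. pt (\<lambda>u v. a (sk j u) (sk j v)) k \<rho>)"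
proof -
  define \<pi> where "\<pi> = pj (2*k) j"
  have jk: "j \<le> 2*k" using jl by simp
  have pip0: "\<pi> permutes {0..<Suc (2*k)}" and sgn: "sign \<pi> = (-1)^(2*k-j)"
    using pj_props[OF jk] unfolding \<pi>_def by auto
  have pip: "\<pi> permutes {0..<2 * Suc k}" by (rule permutes_subset[OF pip0]) auto
  have pperm: "permutation \<pi>" by (rule permutes_imp_permutation[OF _ pip0]) simp
  have io: "\<pi> \<circ> inv \<pi> = id" "inv \<pi> \<circ> \<pi> = id" using permutes_inv_o[OF pip] by auto
  have pi_m: "\<pi> (2*k+1) = 2*k+1" unfolding \<pi>_def pj_def by simp
  have pi_M: "\<pi> (2*k) = j" using jk unfolding \<pi>_def pj_def by simp
  have pi_u: "\<pi> u = sk j u" if "u < 2*k" for u using that unfolding \<pi>_def pj_def sk_def by simp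
  have ipm: "inv \<pi> (2*k+1) = 2*k+1" using permutes_inv_eq[OF pip] pi_m by simp
  have ipM: "inv \<pi> j = 2*k" using permutes_inv_eq[OF pip] pi_M by simp
  let ?S = "{\<sigma>. (\<sigma> permutes {0..<2 * Suc k} \<and> \<sigma> (2*k+1) = 2*k+1) \<and> \<sigma> (2*k) = j}"
  let ?T = "{\<rho>. \<rho> permutes {0..<2*k}}"
  have step1: "(\<Sum>\<sigma>\<in>?S. pt a (Suc k) \<sigma>) = (\<Sum>\<rho>\<in>?T. pt a (Suc k) (\<pi> \<circ> \<rho>))"
  proof (rule sum.reindex_bij_witness[where j="\<lambda>\<sigma>. inv \<pi> \<circ> \<sigma>" and i="\<lambda>\<rho>. \<pi> \<circ> \<rho>"])
    fix c assume a: "c \<in> ?S"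
    show "\<pi> \<circ> (inv \<pi> \<circ> c) = c" by (simp add: comp_assoc[symmetric] io)
    then show "pt a (Suc k) (\<pi> \<circ> (inv \<pi> \<circ> c)) = pt a (Suc k) c" by simp
    have ap: "c permutes {0..<2 * Suc k}" using a by simp
    have c: "(inv \<pi> \<circ> c) permutes {0..<2 * Suc k}" by (rule permutes_compose[OF ap permutes_inv[OF pip]])
    show "inv \<pi> \<circ> c \<in> ?T"
    proof (simp, rule permutes_superset[OF c])
      fix x assume "x \<in> {0..<2 * Suc k} - {0..<2*k}"
      then have "x = 2*k \<or> x = 2*k+1" by auto
      then show "(inv \<pi> \<circ> c) x = x" using a ipm ipM by auto
    qed
  next
    fix b assume b: "b \<in> ?T"
    show "inv \<pi> \<circ> (\<pi> \<circ> b) = b" by (simp add: comp_assoc[symmetric] io)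
    have bp0: "b permutes {0..<2*k}" using b by simp
    have bp: "b permutes {0..<2 * Suc k}" by (rule permutes_subset[OF bp0]) auto
    have "b (2*k) = 2*k" "b (2*k+1) = 2*k+1" using permutes_not_in[OF bp0] by auto
    then show "\<pi> \<circ> b \<in> ?S" using permutes_compose[OF bp pip] pi_m pi_M by simp
  qed
  have step2: "pt a (Suc k) (\<pi> \<circ> \<rho>) = (-1)^j * a j (2*k+1) * pt (\<lambda>u v. a (sk j u) (sk j v)) k \<rho>"
    if r: "\<rho> \<in> ?T" for \<rho>
  proof -
    have rp: "\<rho> permutes {0..<2*k}" using r by simp
    have rperm: "permutation \<rho>" by (rule permutes_imp_permutation[OF _ rp]) simp
    have s: "sign (\<pi> \<circ> \<rho>) = sign \<pi> * sign \<rho>" by (rule sign_compose[OF pperm rperm])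
    have r1: "\<rho> (2*k) = 2*k" "\<rho> (2*k+1) = 2*k+1" using permutes_not_in[OF rp] by auto
    have lastf: "skew a (\<pi> (\<rho> (2*k))) (\<pi> (\<rho> (2*k+1))) = a j (2*k+1)"
      using r1 pi_m pi_M jl by (simp add: skew_def)
    have others: "(\<Prod>i<k. skew a ((\<pi> \<circ> \<rho>) (2*i)) ((\<pi> \<circ> \<rho>) (2*i+1)))
        = (\<Prod>i<k. skew (\<lambda>u v. a (sk j u) (sk j v)) (\<rho> (2*i)) (\<rho> (2*i+1)))"
    proof (rule prod.cong[OF refl])
      fix i assume "i \<in> {..<k}"
      then have "2*i < 2*k" "2*i+1 < 2*k" by auto
      then have "\<rho> (2*i) < 2*k" "\<rho> (2*i+1) < 2*k" using perm_lt[OF rp] by auto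
      then show "skew a ((\<pi> \<circ> \<rho>) (2*i)) ((\<pi> \<circ> \<rho>) (2*i+1)) = skew (\<lambda>u v. a (sk j u) (sk j v)) (\<rho> (2*i)) (\<rho> (2*i+1))"
        using pi_u skew_sk by simp
    qed
    have "pt a (Suc k) (\<pi> \<circ> \<rho>) = of_int (sign \<pi> * sign \<rho>) *
       ((\<Prod>i<k. skew a ((\<pi> \<circ> \<rho>) (2*i)) ((\<pi> \<circ> \<rho>) (2*i+1))) * skew a (\<pi> (\<rho> (2*k))) (\<pi> (\<rho> (2*k+1))))"
      unfolding pt_def s by simp
    also have "\<dots> = of_int (sign \<pi>) * a j (2*k+1) * pt (\<lambda>u v. a (sk j u) (sk j v)) k \<rho>"
      unfolding others lastf pt_def by simp
    also have "of_int (sign \<pi>) = ((-1)^j :: rat)" unfolding sgn neg1_pow_diff[OF jk] by simp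
    finally show ?thesis .
  qed
  show ?thesis unfolding step1 using step2 by (simp add: sum_distrib_left)
qed



lemma pf_expand:
  "pfaffian (Suc k) a = (\<Sum>j<2*k+1. (-1)^j * a j (2*k+1) * pfaffian k (\<lambda>u v. a (sk j u) (sk j v)))"
proof -
  let ?N = "2 * Suc k"
  let ?m = "2*k+1"
  let ?P = "{\<sigma>. \<sigma> permutes {0..<?N}}"
  let ?F = "pt a (Suc k)"
  let ?Q = "{\<sigma>. \<sigma> permutes {0..<?N} \<and> \<sigma> ?m = ?m}"
  have finP: "finite ?P" by (rule finite_permutations) simp
  have S1: "(\<Sum>\<sigma>\<in>?P. ?F \<sigma>) = (\<Sum>p\<in>{..<?N}. (\<Sum>\<sigma>\<in>{\<sigma>. \<sigma> \<in> ?P \<and> inv \<sigma> ?m = p}. ?F \<sigma>))"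
  proof (rule sum.group[symmetric, OF finP])
    show "finite {..<?N}" by simp
    show "(\<lambda>\<sigma>. inv \<sigma> ?m) ` ?P \<subseteq> {..<?N}"
    proof
      fix y assume "y \<in> (\<lambda>\<sigma>. inv \<sigma> ?m) ` ?P"
      then obtain \<sigma> where s: "\<sigma> permutes {0..<?N}" and y: "y = inv \<sigma> ?m" by auto
      show "y \<in> {..<?N}" using perm_lt[OF permutes_inv[OF s], of ?m] y by simp
    qed
  qed
  have S2: "(\<Sum>\<sigma>\<in>{\<sigma>. \<sigma> \<in> ?P \<and> inv \<sigma> ?m = p}. ?F \<sigma>) = (\<Sum>\<sigma>\<in>?Q. ?F \<sigma>)" if p: "p < ?N" for p
  proof -
    have "{\<sigma>. \<sigma> \<in> ?P \<and> inv \<sigma> ?m = p} = {\<sigma>. \<sigma> permutes {0..<?N} \<and> \<sigma> p = ?m}"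
      using permutes_inv_eq by fastforce
    moreover obtain \<rho> where "\<rho> permutes {0..<?N}" "\<rho> ?m = p"
      "\<forall>\<sigma>. \<sigma> permutes {0..<?N} \<longrightarrow> ?F (\<sigma> \<circ> \<rho>) = ?F \<sigma>"
      using rho_exists[OF p, of a] by blast
    ultimately show ?thesis using perm_pos_reindex[of \<rho> ?N ?m p ?F] by simp
  qed
  have S3: "(\<Sum>\<sigma>\<in>?Q. ?F \<sigma>) = (\<Sum>j\<in>{..<?m}. (\<Sum>\<sigma>\<in>{\<sigma>. \<sigma> \<in> ?Q \<and> \<sigma> (2*k) = j}. ?F \<sigma>))"
  proof (rule sum.group[symmetric])
    show "finite ?Q" by (rule finite_subset[OF _ finP]) auto
    show "finite {..<?m}" by simp
    show "(\<lambda>\<sigma>. \<sigma> (2*k)) ` ?Q \<subseteq> {..<?m}"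
    proof
      fix y assume "y \<in> (\<lambda>\<sigma>. \<sigma> (2*k)) ` ?Q"
      then obtain \<sigma> where s: "\<sigma> permutes {0..<?N}" and sm: "\<sigma> ?m = ?m" and y: "y = \<sigma> (2*k)" by auto
      have "y < ?N" using perm_lt[OF s, of "2*k"] y by simp
      moreover have "y \<noteq> ?m"
      proof
        assume "y = ?m"
        then have "\<sigma> (2*k) = \<sigma> ?m" using sm y by simp
        then have "2*k = ?m" using injD[OF permutes_inj[OF s]] by blast
        then show False by simp
      qed
      ultimately show "y \<in> {..<?m}" by auto
    qed
  qed
  have S4': "(\<Sum>\<sigma>\<in>{\<sigma>. \<sigma> \<in> ?Q \<and> \<sigma> (2*k) = j}. ?F \<sigma>)
     = (-1)^j * a j ?m * (\<Sum>\<rho>\<in>{\<rho>. \<rho> permutes {0..<2*k}}. pt (\<lambda>u v. a (sk j u) (sk j v)) k \<rho>)"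
    if "j < ?m" for j
    using S4[OF that, of a] by simp
  have tot: "(\<Sum>\<sigma>\<in>?P. ?F \<sigma>) = of_nat ?N * (\<Sum>j<?m. (-1)^j * a j ?m * (\<Sum>\<rho>\<in>{\<rho>. \<rho> permutes {0..<2*k}}. pt (\<lambda>u v. a (sk j u) (sk j v)) k \<rho>))"
    unfolding S1 using S2 S3 S4' by simp
  have c: "of_nat ?N / (2 ^ Suc k * fact (Suc k)) = (1::rat) / (2^k * fact k)"
  proof -
    have d: "(2::rat)^Suc k * fact (Suc k) = of_nat ?N * (2^k * fact k)" by (simp add: fact_Suc algebra_simps)
    have nz: "(2::rat)^k * fact k \<noteq> 0" by simp
    show ?thesis unfolding d using nz by (simp del: of_nat_mult)
  qed
  define S where "S = (\<Sum>j<?m. (-1)^j * a j ?m * (\<Sum>\<rho>\<in>{\<rho>. \<rho> permutes {0..<2*k}}. pt (\<lambda>u v. a (sk j u) (sk j v)) k \<rho>))"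
  have "pfaffian (Suc k) a = of_nat ?N * S / (2 ^ Suc k * fact (Suc k))"
    unfolding pf_alt[of "Suc k"] tot S_def by simp
  also have "\<dots> = S * (of_nat ?N / (2 ^ Suc k * fact (Suc k)))" by simp
  also have "\<dots> = S / (2^k * fact k)" unfolding c by simp
  also have "\<dots> = (\<Sum>j<?m. (-1)^j * a j ?m * pfaffian k (\<lambda>u v. a (sk j u) (sk j v)))"
    unfolding S_def sum_divide_distrib by (rule sum.cong[OF refl]) (simp add: pf_alt[of k])
  finally show ?thesis .
qed



definition Pt2g :: "(nat \<Rightarrow> rat) \<Rightarrow> nat \<Rightarrow> nat \<Rightarrow> rat" where
  "Pt2g Q i j = Q i * Q j + 2 * (\<Sum>k\<in>{1..<j}. (-1)^k * Q (i+k) * Q (j-k)) + (-1)^j * Q (i+j)"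

lemma Pt2_g: "Pt2 n i j x = Pt2g (\<lambda>i. Pt1 n i x) i j"
  unfolding Pt2_def Pt2g_def by simp

lemma Pt2g_rec: "Pt2g Q a (Suc (Suc c)) + Pt2g Q (Suc a) (Suc c) = Q a * Q (Suc (Suc c)) - Q (Suc a) * Q (Suc c)"
proof -
  define f where "f k = (-1)^k * Q (a+k) * Q (Suc (Suc c) - k)" for k
  have s1: "(\<Sum>k\<in>{1..<Suc (Suc c)}. (-1)^k * Q (a+k) * Q (Suc (Suc c)-k)) = f 1 + (\<Sum>k\<in>{2..<Suc (Suc c)}. f k)"
    unfolding f_def by (subst sum.atLeast_Suc_lessThan) (auto simp: numeral_2_eq_2)
  have s2: "(\<Sum>k\<in>{1..<Suc c}. (-1)^k * Q (Suc a+k) * Q (Suc c-k)) = - (\<Sum>k\<in>{2..<Suc (Suc c)}. f k)"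
  proof -
    have "(\<Sum>k\<in>{2..<Suc (Suc c)}. f k) = (\<Sum>k\<in>{1..<Suc c}. f (Suc k))"
      using sum.shift_bounds_Suc_ivl[of f 1 "Suc c"] by (simp add: numeral_2_eq_2)
    also have "\<dots> = - (\<Sum>k\<in>{1..<Suc c}. (-1)^k * Q (Suc a+k) * Q (Suc c-k))"
      unfolding f_def by (simp add: sum_negf[symmetric])
    finally show ?thesis by simp
  qed
  have f1: "f 1 = - Q (Suc a) * Q (Suc c)" unfolding f_def by simp
  show ?thesis unfolding Pt2g_def s1 s2 f1 by (simp add: algebra_simps)
qed

definition bet :: "(nat \<Rightarrow> rat) \<Rightarrow> rat \<Rightarrow> nat \<Rightarrow> rat" where
  "bet u p i = (if i = 0 then 1 else (u (Suc i) - u 2 * u i - p * u (i-1)) / 4)"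

lemma Delta:
  fixes Q Q' u w :: "nat \<Rightarrow> rat" and t p :: rat
  assumes Q: "\<And>i. Q i = (w i + t * u i) / 2" and Q': "\<And>i. Q' i = (w i - t * u i) / 2"
    and u0: "u 0 = 0" and u1: "u 1 = 1" and w0: "w 0 = 2"
    and wr: "\<And>i. i \<ge> 1 \<Longrightarrow> w i = u (Suc i) + p * u (i-1)"
  shows "a \<ge> 1 \<Longrightarrow> Pt2g Q a b - Pt2g Q' a b = 2 * t * (u a * bet u p b - u b * bet u p a)"
proof (induction b arbitrary: a rule: nat_less_induct)
  case (1 b a)
  have QQ: "Q i * Q j - Q' i * Q' j = t * (u i * w j + w i * u j) / 2" for i j
    unfolding Q Q' by (simp add: field_simps)
  have ba: "bet u p a = (u (Suc a) - u 2 * u a - p * u (a-1)) / 4" using 1(2) by (simp add: bet_def)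
  consider "b = 0" | "b = 1" | c where "b = Suc (Suc c)" by (metis One_nat_def not0_implies_Suc)
  then show ?case
  proof cases
    case 1
    have "Q 0 = 1" "Q' 0 = 1" unfolding Q Q' u0 w0 by simp_all
    then show ?thesis using \<open>b = 0\<close> by (simp add: Pt2g_def Q Q' u0 bet_def algebra_simps)
  next
    case 2
    have w1: "w 1 = u 2" using wr[of 1] u0 by (simp add: numeral_2_eq_2)
    have wa: "w a = u (Suc a) + p * u (a-1)" using wr 1(2) by simp
    have "Pt2g Q a 1 - Pt2g Q' a 1 = (Q a * Q 1 - Q' a * Q' 1) - (Q (Suc a) - Q' (Suc a))"
      by (simp add: Pt2g_def algebra_simps)
    also have "\<dots> = t * (u a * w 1 + w a * u 1) / 2 - t * u (Suc a)" unfolding QQ by (simp add: Q Q' field_simps)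
    finally have e: "Pt2g Q a 1 - Pt2g Q' a 1 = t * (u a * w 1 + w a * u 1) / 2 - t * u (Suc a)" .
    have b1: "bet u p 1 = 0" using u0 u1 by (simp add: bet_def numeral_2_eq_2)
    have "t * (u a * w 1 + w a * u 1) / 2 - t * u (Suc a) = 2 * t * (u a * bet u p 1 - u 1 * bet u p a)"
      unfolding b1 u1 ba w1 wa by (simp add: field_simps)
    then show ?thesis using e \<open>b = 1\<close> by simp
  next
    case 3
    have IH: "Pt2g Q (Suc a) (Suc c) - Pt2g Q' (Suc a) (Suc c) = 2 * t * (u (Suc a) * bet u p (Suc c) - u (Suc c) * bet u p (Suc a))"
      using 1(1) 3 by simp
    have r1: "Pt2g Q a b = Q a * Q b - Q (Suc a) * Q (Suc c) - Pt2g Q (Suc a) (Suc c)"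
      using Pt2g_rec[of Q a c] 3 by simp
    have r2: "Pt2g Q' a b = Q' a * Q' b - Q' (Suc a) * Q' (Suc c) - Pt2g Q' (Suc a) (Suc c)"
      using Pt2g_rec[of Q' a c] 3 by simp
    have "Pt2g Q a b - Pt2g Q' a b = (Q a * Q b - Q' a * Q' b) - (Q (Suc a) * Q (Suc c) - Q' (Suc a) * Q' (Suc c))
       - (Pt2g Q (Suc a) (Suc c) - Pt2g Q' (Suc a) (Suc c))"
      unfolding r1 r2 by simp
    also have "\<dots> = t * (u a * w b + w a * u b) / 2 - t * (u (Suc a) * w (Suc c) + w (Suc a) * u (Suc c)) / 2
       - 2 * t * (u (Suc a) * bet u p (Suc c) - u (Suc c) * bet u p (Suc a))"
      unfolding QQ IH ..
    finally have e: "Pt2g Q a b - Pt2g Q' a b = t * (u a * w b + w a * u b) / 2 - t * (u (Suc a) * w (Suc c) + w (Suc a) * u (Suc c)) / 2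
       - 2 * t * (u (Suc a) * bet u p (Suc c) - u (Suc c) * bet u p (Suc a))" .
    have wa: "w a = u (Suc a) + p * u (a-1)" using wr 1(2) by simp
    have wsa: "w (Suc a) = u (Suc (Suc a)) + p * u a" using wr[of "Suc a"] by simp
    have wb: "w b = u (Suc b) + p * u (Suc c)" using wr[of b] 3 by simp
    have wsc: "w (Suc c) = u (Suc (Suc c)) + p * u c" using wr[of "Suc c"] by simp
    have bb: "bet u p b = (u (Suc b) - u 2 * u b - p * u (Suc c)) / 4" using 3 by (simp add: bet_def)
    have bsc: "bet u p (Suc c) = (u (Suc (Suc c)) - u 2 * u (Suc c) - p * u c) / 4" by (simp add: bet_def)
    have bsa: "bet u p (Suc a) = (u (Suc (Suc a)) - u 2 * u (Suc a) - p * u a) / 4" by (simp add: bet_def)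
    show ?thesis unfolding e wa wsa wb wsc bb bsc bsa ba using 3 by (simp add: field_simps)
  qed
qed



definition es :: "nat set \<Rightarrow> nat \<Rightarrow> (nat \<Rightarrow> rat) \<Rightarrow> rat" where
  "es A i y = (\<Sum>S\<in>{S. S \<subseteq> A \<and> card S = i}. \<Prod>k\<in>S. y k)"

lemma es_0: "finite A \<Longrightarrow> es A 0 y = 1"
proof -
  assume f: "finite A"
  have "{S. S \<subseteq> A \<and> card S = 0} = {{}}"
  proof (rule set_eqI, rule iffI)
    fix S assume "S \<in> {S. S \<subseteq> A \<and> card S = 0}"
    then have "S \<subseteq> A" "card S = 0" by auto
    moreover have "finite S" using \<open>S \<subseteq> A\<close> f by (rule finite_subset)
    ultimately show "S \<in> {{}}" by simp
  qed auto
  then show ?thesis unfolding es_def by simp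
qed

lemma es_insert:
  assumes f: "finite A" and c: "c \<notin> A"
  shows "es (insert c A) (Suc i) y = es A (Suc i) y + y c * es A i y"
proof -
  have seteq: "{S. S \<subseteq> insert c A \<and> card S = Suc i} = {S. S \<subseteq> A \<and> card S = Suc i} \<union> insert c ` {S. S \<subseteq> A \<and> card S = i}"
  proof (rule set_eqI, rule iffI)
    fix S assume "S \<in> {S. S \<subseteq> insert c A \<and> card S = Suc i}"
    then have S: "S \<subseteq> insert c A" "card S = Suc i" by auto
    have fS: "finite S" using S(1) f by (meson finite_insert finite_subset)
    show "S \<in> {S. S \<subseteq> A \<and> card S = Suc i} \<union> insert c ` {S. S \<subseteq> A \<and> card S = i}"
    proof (cases "c \<in> S")
      case True
      then have "S = insert c (S - {c})" by auto
      moreover have "S - {c} \<subseteq> A" using S by auto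
      moreover have "card (S - {c}) = i" using S True fS by simp
      ultimately show ?thesis by blast
    next
      case False
      then show ?thesis using S by auto
    qed
  next
    fix S assume "S \<in> {S. S \<subseteq> A \<and> card S = Suc i} \<union> insert c ` {S. S \<subseteq> A \<and> card S = i}"
    then show "S \<in> {S. S \<subseteq> insert c A \<and> card S = Suc i}"
    proof
      assume "S \<in> {S. S \<subseteq> A \<and> card S = Suc i}" then show ?thesis by auto
    next
      assume "S \<in> insert c ` {S. S \<subseteq> A \<and> card S = i}"
      then obtain T where T: "T \<subseteq> A" "card T = i" "S = insert c T" by auto
      have "finite T" using T f finite_subset by blast
      moreover have "c \<notin> T" using T c by auto
      ultimately show ?thesis using T by auto
    qed
  qed
  have fin1: "finite {S. S \<subseteq> A \<and> card S = Suc i}" using f by simp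
  have fin2: "finite (insert c ` {S. S \<subseteq> A \<and> card S = i})" using f by simp
  have disj: "{S. S \<subseteq> A \<and> card S = Suc i} \<inter> insert c ` {S. S \<subseteq> A \<and> card S = i} = {}" using c by auto
  have inj: "inj_on (insert c) {S. S \<subseteq> A \<and> card S = i}"
    unfolding inj_on_def using c by (metis (no_types, lifting) insert_ident mem_Collect_eq subset_iff)
  have "es (insert c A) (Suc i) y = es A (Suc i) y + (\<Sum>S\<in>insert c ` {S. S \<subseteq> A \<and> card S = i}. \<Prod>k\<in>S. y k)"
    unfolding es_def seteq by (rule sum.union_disjoint[OF fin1 fin2 disj])
  also have "(\<Sum>S\<in>insert c ` {S. S \<subseteq> A \<and> card S = i}. \<Prod>k\<in>S. y k) = (\<Sum>S\<in>{S. S \<subseteq> A \<and> card S = i}. \<Prod>k\<in>insert c S. y k)"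
    by (rule sum.reindex[OF inj, unfolded comp_def])
  also have "\<dots> = (\<Sum>S\<in>{S. S \<subseteq> A \<and> card S = i}. y c * (\<Prod>k\<in>S. y k))"
  proof (rule sum.cong[OF refl])
    fix S assume "S \<in> {S. S \<subseteq> A \<and> card S = i}"
    then have "finite S" "c \<notin> S" using f c finite_subset by auto
    then show "(\<Prod>k\<in>insert c S. y k) = y c * (\<Prod>k\<in>S. y k)" by simp
  qed
  also have "\<dots> = y c * es A i y" unfolding es_def by (simp add: sum_distrib_left)
  finally show ?thesis .
qed

lemma set_1n: "n \<ge> 2 \<Longrightarrow> {1..n} = insert 1 (insert 2 {3..(n::nat)})" by auto

lemma esym_split2:
  assumes "n \<ge> 2"
  shows "esym n (Suc (Suc i)) y = es {3..n} (Suc (Suc i)) y + (y 1 + y 2) * es {3..n} (Suc i) y + y 1 * y 2 * es {3..n} i y"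
proof -
  have "esym n (Suc (Suc i)) y = es (insert 1 (insert 2 {3..n})) (Suc (Suc i)) y"
    unfolding esym_def es_def set_1n[OF assms] ..
  also have "\<dots> = es (insert 2 {3..n}) (Suc (Suc i)) y + y 1 * es (insert 2 {3..n}) (Suc i) y"
    by (rule es_insert) auto
  also have "\<dots> = es {3..n} (Suc (Suc i)) y + y 2 * es {3..n} (Suc i) y + y 1 * (es {3..n} (Suc i) y + y 2 * es {3..n} i y)"
    by (simp add: es_insert)
  finally show ?thesis by (simp add: algebra_simps)
qed

lemma esym_split1:
  assumes "n \<ge> 2"
  shows "esym n (Suc 0) y = es {3..n} 1 y + (y 1 + y 2)"
proof -
  have "esym n (Suc 0) y = es (insert 1 (insert 2 {3..n})) (Suc 0) y"
    unfolding esym_def es_def set_1n[OF assms] ..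
  also have "\<dots> = es (insert 2 {3..n}) (Suc 0) y + y 1 * es (insert 2 {3..n}) 0 y"
    by (rule es_insert) auto
  also have "\<dots> = es {3..n} (Suc 0) y + y 2 * es {3..n} 0 y + y 1 * es (insert 2 {3..n}) 0 y"
    by (simp add: es_insert)
  finally show ?thesis by (simp add: es_0 algebra_simps)
qed

definition uu :: "nat \<Rightarrow> (nat \<Rightarrow> rat) \<Rightarrow> nat \<Rightarrow> rat" where
  "uu n y i = (if i = 0 then 0 else es {3..n} (i-1) y)"
definition ww :: "nat \<Rightarrow> (nat \<Rightarrow> rat) \<Rightarrow> nat \<Rightarrow> rat" where
  "ww n y i = (if i = 0 then 2 else uu n y (Suc i) + y 1 * y 2 * uu n y (i-1))"

lemma Pt1_uw: "n \<ge> 2 \<Longrightarrow> Pt1 n i y = (ww n y i + (y 1 + y 2) * uu n y i) / 2"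
proof -
  assume n: "n \<ge> 2"
  consider "i = 0" | "i = 1" | j where "i = Suc (Suc j)" by (metis One_nat_def not0_implies_Suc)
  then show ?thesis
  proof cases
    case 1 then show ?thesis by (simp add: Pt1_def ww_def uu_def)
  next
    case 2 then show ?thesis using esym_split1[OF n, of y]
      by (simp add: Pt1_def ww_def uu_def es_0 algebra_simps)
  next
    case 3 then show ?thesis using esym_split2[OF n, of j y]
      by (simp add: Pt1_def ww_def uu_def algebra_simps)
  qed
qed

lemma es_sbox: "es {3..n} i (sbox x) = es {3..n} i x"
  unfolding es_def sbox_def
  by (rule sum.cong[OF refl], rule prod.cong[OF refl]) auto

lemma uu_sbox: "uu n (sbox x) = uu n x"
  by (rule ext) (simp add: uu_def es_sbox)

lemma ww_sbox: "ww n (sbox x) = ww n x"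
  by (rule ext) (unfold ww_def uu_sbox, simp add: sbox_def)

lemma Pt2_diff:
  assumes n: "n \<ge> 2" and a: "a \<ge> 1"
  shows "Pt2 n a b x - Pt2 n a b (sbox x) = 2 * (x 1 + x 2) * (uu n x a * bet (uu n x) (x 1 * x 2) b - uu n x b * bet (uu n x) (x 1 * x 2) a)"
proof -
  have Q: "Pt1 n i x = (ww n x i + (x 1 + x 2) * uu n x i) / 2" for i using Pt1_uw[OF n] .
  have Q': "Pt1 n i (sbox x) = (ww n x i - (x 1 + x 2) * uu n x i) / 2" for i
    using Pt1_uw[OF n, of i "sbox x"] unfolding uu_sbox ww_sbox by (simp add: sbox_def algebra_simps)
  have u0: "uu n x 0 = 0" by (simp add: uu_def)
  have u1: "uu n x 1 = 1" by (simp add: uu_def es_0)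
  have w0: "ww n x 0 = 2" by (simp add: ww_def)
  have wr: "\<And>i. i \<ge> 1 \<Longrightarrow> ww n x i = uu n x (Suc i) + (x 1 * x 2) * uu n x (i-1)" by (simp add: ww_def)
  show ?thesis unfolding Pt2_g
    by (rule Delta[where w="ww n x", OF Q Q' u0 u1 w0 wr a])
qed



lemma sorted_gt_distinct: "sorted_wrt (>) (xs::nat list) \<Longrightarrow> distinct xs"
  by (induction xs) auto

lemma filter_remove_nth:
  assumes "distinct xs" "j < length xs" "\<forall>p\<in>set xs. p \<in> S \<longleftrightarrow> p = xs!j"
  shows "filter (\<lambda>p. p \<notin> S) xs = take j xs @ drop (Suc j) xs"
proof -
  have xs: "xs = take j xs @ xs!j # drop (Suc j) xs" using assms(2) by (simp add: id_take_nth_drop)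
  have d: "distinct (take j xs @ xs!j # drop (Suc j) xs)" using assms(1) xs by simp
  have A: "filter (\<lambda>p. p \<notin> S) (take j xs) = take j xs"
  proof (rule filter_True, rule ballI)
    fix p assume p: "p \<in> set (take j xs)"
    then have "p \<in> set xs" by (meson in_set_takeD)
    moreover have "p \<noteq> xs!j" using d p by auto
    ultimately show "p \<notin> S" using assms(3) by blast
  qed
  have B: "filter (\<lambda>p. p \<notin> S) (drop (Suc j) xs) = drop (Suc j) xs"
  proof (rule filter_True, rule ballI)
    fix p assume p: "p \<in> set (drop (Suc j) xs)"
    then have "p \<in> set xs" by (meson in_set_dropD)
    moreover have "p \<noteq> xs!j" using d p by auto
    ultimately show "p \<notin> S" using assms(3) by blast
  qed
  have "xs!j \<in> S" using assms(2,3) by simp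
  then have "filter (\<lambda>p. p \<notin> S) xs = filter (\<lambda>p. p \<notin> S) (take j xs) @ filter (\<lambda>p. p \<notin> S) (drop (Suc j) xs)"
    by (subst xs) simp
  then show ?thesis using A B by simp
qed

lemma rest_struct:
  assumes sp: "strict_partition_le n lam" and len: "(length lam + 1) div 2 = Suc k" and j: "j < 2*k+1"
  defines "rest \<equiv> remove_parts lam {part lam (Suc j), part lam (2 * Suc k)}"
  shows "length rest = 2*k \<and> (\<forall>u<2*k. part rest (Suc u) = part lam (Suc (sk j u)))"
proof -
  have dl: "distinct lam" using sp sorted_gt_distinct unfolding strict_partition_le_def by blast
  have pos: "\<forall>p\<in>set lam. 1 \<le> p" using sp unfolding strict_partition_le_def by blast
  have ll: "length lam = 2*k+1 \<or> length lam = 2*k+2" using len by presburger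
  obtain L where L: "distinct L" "length L = 2*k+1" "\<And>i. i < 2*k+1 \<Longrightarrow> L!i = lam!i"
    and R: "rest = take j L @ drop (Suc j) L"
  proof (cases "length lam = 2*k+1")
    case True
    have pr: "part lam (2 * Suc k) = 0" using True by (simp add: part_def)
    have pj: "part lam (Suc j) = lam!j" using True j by (simp add: part_def)
    have "rest = take j lam @ drop (Suc j) lam"
      unfolding rest_def remove_parts_def pr pj
      by (rule filter_remove_nth[OF dl]) (use True j pos in auto)
    then show ?thesis using that[of lam] dl True by simp
  next
    case False
    then have ln: "length lam = 2*k+2" using ll by simp
    define L where "L = butlast lam"
    define z where "z = last lam"
    have ne: "lam \<noteq> []" using ln by auto
    have lz: "lam = L @ [z]" unfolding L_def z_def using ne by simp
    have lL: "length L = 2*k+1" unfolding L_def using ln by simp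
    have Li: "L!i = lam!i" if "i < 2*k+1" for i unfolding L_def using that ln by (simp add: nth_butlast)
    have dL: "distinct L" "z \<notin> set L" using dl lz by (metis distinct_append, metis distinct_append disjoint_iff list.set_intros(1))
    have pr: "part lam (2 * Suc k) = z" using ln lz unfolding part_def by (simp add: nth_append)
    have pj: "part lam (Suc j) = L!j" using ln j Li by (simp add: part_def)
    have "rest = filter (\<lambda>p. p \<notin> {L!j, z}) L"
      unfolding rest_def remove_parts_def pr pj by (subst lz) simp
    also have "\<dots> = take j L @ drop (Suc j) L"
      by (rule filter_remove_nth[OF dL(1)]) (use lL j dL(2) in auto)
    finally show ?thesis using that[of L] dL lL Li by blast
  qed
  have lr: "length rest = 2*k" using R L j by simp
  have "part rest (Suc u) = part lam (Suc (sk j u))" if u: "u < 2*k" for u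
  proof -
    have "part rest (Suc u) = rest!u" using lr u by (simp add: part_def)
    also have "\<dots> = L!(sk j u)" unfolding R using u j L(2) by (auto simp: nth_append sk_def min_def)
    also have "\<dots> = lam!(sk j u)" using L(3) u by (simp add: sk_def)
    also have "\<dots> = part lam (Suc (sk j u))" using u ll by (auto simp: part_def sk_def)
    finally show ?thesis .
  qed
  then show ?thesis using lr by blast
qed



theorem theorem2:
  fixes n :: nat and lam :: "nat list" and x :: "nat \<Rightarrow> rat"
  assumes "n \<ge> 3" and "strict_partition_le n lam" and "length lam \<ge> 3"
    and "x 1 + x 2 \<noteq> 0"
  shows "(let r = 2 * ((length lam + 1) div 2) in
     (\<Sum>j\<in>{1..<r}. (-1)^(j-1)
        * dbox (Pt2 n (part lam j) (part lam r)) x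
        * dbox (PtP n (remove_parts lam {part lam j, part lam r})) x)) = 0"
proof -
  note n3 = assms(1) and sp = assms(2) and l3 = assms(3) and tnz = assms(4)
  have n2: "n \<ge> 2" using n3 by simp
  have ge2: "(length lam + 1) div 2 \<ge> 2" using l3 by linarith
  obtain k where kdef: "(length lam + 1) div 2 = Suc k"
    using that[of "(length lam + 1) div 2 - 1"] ge2 by simp
  have k1: "k \<ge> 1" using kdef l3 by presburger
  have ll: "length lam = 2*k+1 \<or> length lam = 2*k+2" using kdef by presburger
  define m where "m = 2*k+1"
  define t where "t = x 1 + x 2"
  define lh where "lh u = part lam (Suc u)" for u
  define \<alpha> where "\<alpha> u = uu n x (lh u)" for u
  define \<beta> where "\<beta> u = bet (uu n x) (x 1 * x 2) (lh u)" for u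
  define X where "X u v = (Pt2 n (lh u) (lh v) x + Pt2 n (lh u) (lh v) (sbox x)) / 2" for u v
  have pos: "\<forall>p\<in>set lam. 1 \<le> p" using sp unfolding strict_partition_le_def by blast
  have lh1: "lh u \<ge> 1" if "u \<le> 2*k" for u
  proof -
    have "u < length lam" using that ll by auto
    then show ?thesis unfolding lh_def part_def using pos nth_mem by auto
  qed
  have Mx: "Pt2 n (lh u) (lh v) x = X u v + t * WW \<alpha> \<beta> u v"
   and Ms: "Pt2 n (lh u) (lh v) (sbox x) = X u v + (-t) * WW \<alpha> \<beta> u v" if "u \<le> 2*k" for u v
  proof -
    have "Pt2 n (lh u) (lh v) x - Pt2 n (lh u) (lh v) (sbox x) = 2 * t * WW \<alpha> \<beta> u v"
      using Pt2_diff[OF n2 lh1[OF that], of "lh v" x] unfolding WW_def \<alpha>_def \<beta>_def t_def by simp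
    then show "Pt2 n (lh u) (lh v) x = X u v + t * WW \<alpha> \<beta> u v"
      and "Pt2 n (lh u) (lh v) (sbox x) = X u v + (-t) * WW \<alpha> \<beta> u v"
      unfolding X_def by (simp_all add: field_simps)
  qed
  define P where "P j \<tau> = pfaffian k (\<lambda>u v. X (sk j u) (sk j v) + \<tau> * WW (\<lambda>u. \<alpha> (sk j u)) (\<lambda>u. \<beta> (sk j u)) u v)" for j \<tau>
  have skle: "sk j u \<le> 2*k" if "u < 2*k" for j u using that by (simp add: sk_def)
  have PtP_rest: "PtP n (remove_parts lam {part lam (Suc j), part lam (2 * Suc k)}) x = P j t
      \<and> PtP n (remove_parts lam {part lam (Suc j), part lam (2 * Suc k)}) (sbox x) = P j (-t)"
    if j: "j < m" for j
  proof -
    have rs: "length (remove_parts lam {part lam (Suc j), part lam (2 * Suc k)}) = 2*k"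
      "\<forall>u<2*k. part (remove_parts lam {part lam (Suc j), part lam (2 * Suc k)}) (Suc u) = part lam (Suc (sk j u))"
      using rest_struct[OF sp kdef, of j] j unfolding m_def by auto
    have l2: "(2*k + 1) div 2 = k" by simp
    show ?thesis
      unfolding PtP_def P_def rs(1) l2
    proof (intro conjI pf_cong)
      fix u v assume uv: "u < v" "v < 2*k"
      then have u2: "u < 2*k" by simp
      show "Pt2 n (part (remove_parts lam {part lam (Suc j), part lam (2 * Suc k)}) (u + 1))
             (part (remove_parts lam {part lam (Suc j), part lam (2 * Suc k)}) (v + 1)) x =
            X (sk j u) (sk j v) + t * WW (\<lambda>u. \<alpha> (sk j u)) (\<lambda>u. \<beta> (sk j u)) u v"
        using rs(2) uv u2 Mx[OF skle[of u j, OF u2], of "sk j v"] unfolding lh_def WW_def by simp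
      show "Pt2 n (part (remove_parts lam {part lam (Suc j), part lam (2 * Suc k)}) (u + 1))
             (part (remove_parts lam {part lam (Suc j), part lam (2 * Suc k)}) (v + 1)) (sbox x) =
            X (sk j u) (sk j v) + (-t) * WW (\<lambda>u. \<alpha> (sk j u)) (\<lambda>u. \<beta> (sk j u)) u v"
        using rs(2) uv u2 Ms[OF skle[of u j, OF u2], of "sk j v"] unfolding lh_def WW_def by simp
    qed
  qed
  have Paff: "P j \<tau> = P j 0 + \<tau> * (P j 1 - P j 0)" for j \<tau>
    unfolding P_def by (rule pf_affine)
  define H where "H \<tau> = (\<Sum>j<m. (-1)^j * WW \<alpha> \<beta> j m * P j \<tau>)" for \<tau>
  have Haff: "H \<tau> = H 0 + \<tau> * (H 1 - H 0)" for \<tau>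
    unfolding H_def
    by (subst Paff) (simp add: sum.distrib sum_distrib_left sum_subtractf algebra_simps)
  define X1 where "X1 u v = (if v = m then 0 else X u v)" for u v
  define F where "F \<tau> = pfaffian (Suc k) (\<lambda>u v. X1 u v + \<tau> * WW \<alpha> \<beta> u v)" for \<tau>
  have FH: "F \<tau> = \<tau> * H \<tau>" for \<tau>
  proof -
    have "F \<tau> = (\<Sum>j<m. (-1)^j * (X1 j m + \<tau> * WW \<alpha> \<beta> j m) *
        pfaffian k (\<lambda>u v. X1 (sk j u) (sk j v) + \<tau> * WW \<alpha> \<beta> (sk j u) (sk j v)))"
      unfolding F_def pf_expand m_def ..
    also have "\<dots> = (\<Sum>j<m. (-1)^j * (\<tau> * WW \<alpha> \<beta> j m) * P j \<tau>)"
    proof (rule sum.cong[OF refl])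
      fix j assume "j \<in> {..<m}"
      have "pfaffian k (\<lambda>u v. X1 (sk j u) (sk j v) + \<tau> * WW \<alpha> \<beta> (sk j u) (sk j v)) = P j \<tau>"
        unfolding P_def
      proof (rule pf_cong)
        fix u v assume "u < v" "v < 2*k"
        then have "sk j v \<noteq> m" unfolding m_def sk_def by auto
        then show "X1 (sk j u) (sk j v) + \<tau> * WW \<alpha> \<beta> (sk j u) (sk j v) =
           X (sk j u) (sk j v) + \<tau> * WW (\<lambda>u. \<alpha> (sk j u)) (\<lambda>u. \<beta> (sk j u)) u v"
          unfolding X1_def WW_def by simp
      qed
      then show "(-1)^j * (X1 j m + \<tau> * WW \<alpha> \<beta> j m) *
        pfaffian k (\<lambda>u v. X1 (sk j u) (sk j v) + \<tau> * WW \<alpha> \<beta> (sk j u) (sk j v)) =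
        (-1)^j * (\<tau> * WW \<alpha> \<beta> j m) * P j \<tau>" unfolding X1_def by simp
    qed
    also have "\<dots> = \<tau> * H \<tau>" unfolding H_def by (simp add: sum_distrib_left algebra_simps)
    finally show ?thesis .
  qed
  have Faff: "F \<tau> = F 0 + \<tau> * (F 1 - F 0)" for \<tau>
    unfolding F_def by (rule pf_affine)
  have "2 * H 2 = 2 * H 1" using Faff[of 2] FH[of 2] FH[of 1] FH[of 0] by simp
  then have H21: "H 2 = H 1" by simp
  have H10: "H 1 = H 0" using Haff[of 2] H21 by simp
  
  have r: "2 * ((length lam + 1) div 2) = Suc m" unfolding kdef m_def by simp
  have trm: "(-1)^(Suc j - 1) * dbox (Pt2 n (part lam (Suc j)) (part lam (Suc m))) x
        * dbox (PtP n (remove_parts lam {part lam (Suc j), part lam (Suc m)})) x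
      = 4 * ((-1)^j * WW \<alpha> \<beta> j m * (P j 1 - P j 0))" if j: "j < m" for j
  proof -
    have sm: "Suc m = 2 * Suc k" unfolding m_def by simp
    have j2: "j \<le> 2*k" using j unfolding m_def by simp
    have d1: "dbox (Pt2 n (part lam (Suc j)) (part lam (Suc m))) x = 2 * WW \<alpha> \<beta> j m"
      using Mx[OF j2, of m] Ms[OF j2, of m] tnz unfolding dbox_def lh_def t_def by (simp add: field_simps)
    have pr: "PtP n (remove_parts lam {part lam (Suc j), part lam (Suc m)}) x = P j t"
       "PtP n (remove_parts lam {part lam (Suc j), part lam (Suc m)}) (sbox x) = P j (-t)"
      using PtP_rest[OF j] unfolding sm by auto
    have d2: "dbox (PtP n (remove_parts lam {part lam (Suc j), part lam (Suc m)})) x = 2 * (P j 1 - P j 0)"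
      unfolding dbox_def pr using Paff[of j t] Paff[of j "-t"] tnz unfolding t_def by (simp add: field_simps)
    show ?thesis unfolding d1 d2 by simp
  qed
  have "(\<Sum>j\<in>{1..<Suc m}. (-1)^(j-1) * dbox (Pt2 n (part lam j) (part lam (Suc m))) x
        * dbox (PtP n (remove_parts lam {part lam j, part lam (Suc m)})) x)
      = (\<Sum>j\<in>{0..<m}. (-1)^(Suc j-1) * dbox (Pt2 n (part lam (Suc j)) (part lam (Suc m))) x
        * dbox (PtP n (remove_parts lam {part lam (Suc j), part lam (Suc m)})) x)"
    using sum.shift_bounds_Suc_ivl[of "\<lambda>j. (-1)^(j-1) * dbox (Pt2 n (part lam j) (part lam (Suc m))) x
        * dbox (PtP n (remove_parts lam {part lam j, part lam (Suc m)})) x" 0 m] by simp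
  also have "\<dots> = (\<Sum>j<m. 4 * ((-1)^j * WW \<alpha> \<beta> j m * (P j 1 - P j 0)))"
    unfolding atLeast0LessThan by (rule sum.cong[OF refl], rule trm) simp
  also have "\<dots> = 4 * (H 1 - H 0)" unfolding H_def
    by (simp add: sum_distrib_left sum_subtractf algebra_simps)
  also have "\<dots> = 0" using H10 by simp
  finally show ?thesis unfolding r Let_def .
qed

end
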